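(* Let $m$ be the weight defined below; all implicit constants are absolute. Then: (i) There is an absolute constant $C$ such that $1\le m(t,k,\eta)\le C$ for all $t\ge0$, $(k,\eta)\in\mathbb Z\times\mathbb R$. (ii) If $t\ge0$, $k\neq0$ and $(l,\xi)\in S_t$, then $\dfrac{1}{1+|t-\eta/k|}\lesssim\sqrt{\tfrac{\partial_tm}{m}(t,l,\xi)}\,\langle k-l,\eta-\xi\rangle^3$. (iii) If $t\ge1$, $k\neq0$ and $|k,\eta|\le2|l,\xi|$, then $$\frac{|k,\eta|}{k^2}\frac{1}{1+|t-\eta/k|^2}\lesssim\frac{\langle\eta/k^3\rangle^{1/2}}{1+|t-\eta/k|}\Big(1+\sqrt t\sqrt{\tfrac{\partial_tm}{m}(t,l,\xi)}\Big)\langle k-l,\eta-\xi\rangle^5+\frac{1}{\langle t\rangle^2}.$$ (iv) For all $t\ge0$, $\eta,\xi\in\mathbb R$ and $k\neq0$: $|m(t,k,\eta)-m(t,k,\xi)|\lesssim\dfrac{|\eta-\xi|}{|k|}$.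
   Context: For $(k,\eta)\in\mathbb Z\times\mathbb R$ write $|k,\eta|=|k|+|\eta|$ and $\langle k,\eta\rangle=(1+|k|^2+|\eta|^2)^{1/2}$, $\langle x\rangle=(1+x^2)^{1/2}$. Let $S_t=\{(k,\eta)\in\mathbb Z\times\mathbb R: |k,\eta|\le10t^2\}$. The weight $m(t,k,\eta)$ is defined by $m(0,k,\eta)=1$ and $\partial_tm(t,k,\eta)=\sup_{j\in\mathbb Z\setminus\{0\}}\Big(\frac{10}{1+(\eta/j-t)^2}\frac{1}{\langle k-j\rangle^3}\Big)m(t,k,\eta)$ if $(k,\eta)\in S_t$, and $\partial_tm(t,k,\eta)=0$ otherwise. *)

theory Defs
  imports "HOL-Analysis.Analysis"
begin

definition jbr :: "int \<Rightarrow> real \<Rightarrow> real" where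
  "jbr k \<eta> = sqrt (1 + (real_of_int k)\<^sup>2 + \<eta>\<^sup>2)"

definition jbr1 :: "real \<Rightarrow> real" where
  "jbr1 x = sqrt (1 + x\<^sup>2)"

definition S :: "real \<Rightarrow> (int \<times> real) set" where
  "S t = {(k, \<eta>). \<bar>real_of_int k\<bar> + \<bar>\<eta>\<bar> \<le> 10 * t\<^sup>2}"

definition mrate :: "real \<Rightarrow> int \<Rightarrow> real \<Rightarrow> real" where
  "mrate t k \<eta> =
     (if (k, \<eta>) \<in> S t then
        (SUP j\<in>{j::int. j \<noteq> 0}.
           (10 / (1 + (\<eta> / real_of_int j - t)\<^sup>2)) * (1 / (jbr1 (real_of_int (k - j))) ^ 3))
      else 0)"

text \<open>The weight m: the solution of m(0)=1, \<partial>_t m = mrate * m, i.e.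
  m(t,k,eta) = exp (integral over [0,t] of mrate).\<close>
definition mw :: "real \<Rightarrow> int \<Rightarrow> real \<Rightarrow> real" where
  "mw t k \<eta> = exp (integral {0..t} (\<lambda>s. mrate s k \<eta>))"

end

theory Submission
  imports Defs
begin


definition fj :: "int \<Rightarrow> real \<Rightarrow> int \<Rightarrow> real \<Rightarrow> real" where
  "fj k \<eta> j s = (10 / (1 + (\<eta> / real_of_int j - s)\<^sup>2)) * (1 / (jbr1 (real_of_int (k - j))) ^ 3)"

definition FF :: "int \<Rightarrow> real \<Rightarrow> real \<Rightarrow> real" where
  "FF k \<eta> s = (SUP j\<in>{j::int. j \<noteq> 0}. fj k \<eta> j s)"

lemma mrate_eq: "mrate t k \<eta> = (if (k,\<eta>) \<in> S t then FF k \<eta> t else 0)"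
  unfolding mrate_def FF_def fj_def by (rule refl)

lemma ne_nz: "{j::int. j \<noteq> 0} \<noteq> {}"
  by (metis empty_iff mem_Collect_eq one_neq_zero)

lemma jbr1_ge1: "jbr1 x \<ge> 1"
  unfolding jbr1_def by simp

lemma jbr1_ge_abs: "jbr1 x \<ge> \<bar>x\<bar>"
  proof -
  have "sqrt (x\<^sup>2) \<le> sqrt (1 + x\<^sup>2)" by (rule real_sqrt_le_mono) simp
  then show ?thesis unfolding jbr1_def by simp
qed

lemma jbr1_sq: "(jbr1 x)\<^sup>2 = 1 + x\<^sup>2"
  unfolding jbr1_def by simp

lemma cj_pos: "0 < 1 / jbr1 x ^ 3"
  using jbr1_ge1[of x] by simp

lemma cj_le1: "1 / jbr1 x ^ 3 \<le> 1"
  using jbr1_ge1[of x] by (simp add: power_le_one)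

lemma cj_le_sq: "1 / jbr1 x ^ 3 \<le> 1 / (1 + x\<^sup>2)"
proof -
  have J: "jbr1 x \<ge> 1" by (rule jbr1_ge1)
  have "1 / jbr1 x ^ 3 \<le> 1 / (jbr1 x)^2"
    using J by (intro divide_left_mono) (auto simp: power_increasing)
  also have "\<dots> = 1 / (1 + x\<^sup>2)" by (simp add: jbr1_sq)
  finally show ?thesis .
qed

lemma g_le1: "1 / (1 + (x::real)\<^sup>2) \<le> 1"
  by (simp add: divide_le_eq_1 add_pos_nonneg)

lemma g_pos: "0 < 1 / (1 + (x::real)\<^sup>2)"
  by (simp add: add_pos_nonneg)

lemma fj_nonneg: "0 \<le> fj k \<eta> j s"
  unfolding fj_def using cj_pos[of "real_of_int (k-j)"] by (intro mult_nonneg_nonneg) (auto simp: add_pos_nonneg)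

lemma fj_le10: "fj k \<eta> j s \<le> 10"
proof -
  have a: "10 / (1 + (\<eta> / real_of_int j - s)\<^sup>2) \<le> 10"
    by (simp add: divide_le_eq add_pos_nonneg)
  have b: "1 / jbr1 (real_of_int (k - j)) ^ 3 \<le> 1" by (rule cj_le1)
  have c: "0 \<le> 1 / jbr1 (real_of_int (k - j)) ^ 3" using cj_pos less_imp_le by blast
  have "fj k \<eta> j s \<le> 10 * 1"
    unfolding fj_def by (rule mult_mono[OF a b]) (use c in auto)
  then show ?thesis by simp
qed

lemma FF_bdd: "bdd_above ((\<lambda>j. fj k \<eta> j s) ` A)"
  by (rule bdd_aboveI[where M=10]) (auto simp: fj_le10)

lemma FF_ge: "j \<noteq> 0 \<Longrightarrow> fj k \<eta> j s \<le> FF k \<eta> s"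
  unfolding FF_def by (rule cSUP_upper) (auto simp: FF_bdd)

lemma FF_le10: "FF k \<eta> s \<le> 10"
  unfolding FF_def by (rule cSUP_least[OF ne_nz]) (simp add: fj_le10)

lemma FF_nonneg: "0 \<le> FF k \<eta> s"
  using FF_ge[of 1 k \<eta> s] fj_nonneg[of k \<eta> 1 s] by simp

lemma FF_approx:
  assumes "\<epsilon> > 0"
  shows "\<exists>j. j \<noteq> 0 \<and> FF k \<eta> s - \<epsilon> < fj k \<eta> j s"
proof -
  have "FF k \<eta> s - \<epsilon> < FF k \<eta> s" using assms by simp
  then have "\<exists>j\<in>{j::int. j \<noteq> 0}. FF k \<eta> s - \<epsilon> < fj k \<eta> j s"
    unfolding FF_def by (subst (asm) less_cSUP_iff[OF ne_nz FF_bdd]) simp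
  then show ?thesis by auto
qed

lemma abs_le_half: "\<bar>x\<bar> \<le> (1 + (x::real)\<^sup>2) / 2"
proof -
  have "2 * \<bar>x\<bar> * 1 \<le> \<bar>x\<bar>\<^sup>2 + 1\<^sup>2" by (rule sum_squares_bound)
  then show ?thesis by simp
qed

lemma g_diff_eq: "1 / (1 + x\<^sup>2) - 1 / (1 + y\<^sup>2) = (y - x) * (y + x) / ((1 + x\<^sup>2) * (1 + (y::real)\<^sup>2))"
proof -
  have px: "1 + x\<^sup>2 \<noteq> 0" "1 + y\<^sup>2 \<noteq> 0" by (auto simp: add_pos_nonneg less_imp_neq[symmetric] )
  have "1 / (1 + x\<^sup>2) - 1 / (1 + y\<^sup>2) = ((1 + y\<^sup>2) - (1 + x\<^sup>2)) / ((1 + x\<^sup>2) * (1 + y\<^sup>2))"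
    using px by (simp add: diff_frac_eq)
  also have "(1 + y\<^sup>2) - (1 + x\<^sup>2) = (y - x) * (y + x)"
    by (simp add: power2_eq_square algebra_simps)
  finally show ?thesis .
qed

lemma g_lip: "\<bar>1 / (1 + x\<^sup>2) - 1 / (1 + y\<^sup>2)\<bar> \<le> \<bar>x - (y::real)\<bar>"
proof -
  have px: "0 < 1 + x\<^sup>2" "0 < 1 + y\<^sup>2" by (auto simp: add_pos_nonneg)
  have h: "\<bar>y + x\<bar> \<le> (1 + x\<^sup>2) * (1 + y\<^sup>2)"
  proof -
    have e: "(1 + x\<^sup>2) * (1 + y\<^sup>2) = 1 + x\<^sup>2 + y\<^sup>2 + x\<^sup>2 * y\<^sup>2"
      by (simp add: algebra_simps)
    have "0 \<le> x\<^sup>2 * y\<^sup>2" by simp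
    have "\<bar>y + x\<bar> \<le> \<bar>y\<bar> + \<bar>x\<bar>" by (rule abs_triangle_ineq)
    also have "\<dots> \<le> (1 + y\<^sup>2) / 2 + (1 + x\<^sup>2) / 2" by (rule add_mono[OF abs_le_half abs_le_half])
    also have "\<dots> \<le> 1 + x\<^sup>2 + y\<^sup>2 + x\<^sup>2 * y\<^sup>2"
      using \<open>0 \<le> x\<^sup>2 * y\<^sup>2\<close> zero_le_power2[of x] zero_le_power2[of y] by (simp add: field_simps)
    finally show ?thesis unfolding e .
  qed
  have "\<bar>1 / (1 + x\<^sup>2) - 1 / (1 + y\<^sup>2)\<bar> = \<bar>y - x\<bar> * \<bar>y + x\<bar> / ((1 + x\<^sup>2) * (1 + y\<^sup>2))"
    using px by (simp add: g_diff_eq abs_mult)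
  also have "\<dots> \<le> \<bar>y - x\<bar>"
    using px h by (simp add: divide_le_eq mult_left_mono)
  finally show ?thesis by (simp add: abs_minus_commute)
qed

lemma fj_alt: "fj k \<eta> j s = 10 * (1 / jbr1 (real_of_int (k - j)) ^ 3) * (1 / (1 + (\<eta> / real_of_int j - s)\<^sup>2))"
  by (simp add: fj_def)

lemma fj_lip: "\<bar>fj k \<eta> j s - fj k \<eta> j s'\<bar> \<le> 10 * \<bar>s - s'\<bar>"
proof -
  let ?c = "1 / jbr1 (real_of_int (k - j)) ^ 3"
  let ?a = "\<eta> / real_of_int j"
  have c: "0 \<le> ?c" "?c \<le> 1" using cj_pos[of "real_of_int (k - j)"] cj_le1[of "real_of_int (k - j)"] by auto
  have "fj k \<eta> j s - fj k \<eta> j s' = (10 * ?c) * (1 / (1 + (?a - s)\<^sup>2) - 1 / (1 + (?a - s')\<^sup>2))"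
    unfolding fj_alt by (simp only: right_diff_distrib)
  then have "\<bar>fj k \<eta> j s - fj k \<eta> j s'\<bar> = 10 * ?c * \<bar>1 / (1 + (?a - s)\<^sup>2) - 1 / (1 + (?a - s')\<^sup>2)\<bar>"
    using c by (simp only: abs_mult)
  also have "\<dots> \<le> 10 * 1 * \<bar>(?a - s) - (?a - s')\<bar>"
    by (rule mult_mono) (use c g_lip[of "?a - s" "?a - s'"] in auto)
  finally show ?thesis by (simp add: abs_minus_commute)
qed

lemma sup_diff:
  assumes "\<And>j. j \<noteq> 0 \<Longrightarrow> \<bar>fj k \<eta> j s - fj k' \<eta>' j s'\<bar> \<le> B"
  shows "\<bar>FF k \<eta> s - FF k' \<eta>' s'\<bar> \<le> B"
proof -
  have one: "FF a b x - FF a' b' x' \<le> B"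
    if h: "\<And>j. j \<noteq> 0 \<Longrightarrow> \<bar>fj a b j x - fj a' b' j x'\<bar> \<le> B" for a b x a' b' x'
  proof (rule field_le_epsilon)
    fix e :: real assume e: "0 < e"
    obtain j where j: "j \<noteq> 0" "FF a b x - e < fj a b j x" using FF_approx[OF e] by blast
    have "fj a' b' j x' \<le> FF a' b' x'" using FF_ge[OF j(1)] by blast
    with j h[OF j(1)] show "FF a b x - FF a' b' x' \<le> B + e" by linarith
  qed
  have "FF k \<eta> s - FF k' \<eta>' s' \<le> B" by (rule one) (rule assms)
  moreover have "FF k' \<eta>' s' - FF k \<eta> s \<le> B" by (rule one) (use assms in \<open>simp add: abs_minus_commute\<close>)
  ultimately show ?thesis by linarith
qed

lemma FF_lip: "\<bar>FF k \<eta> s - FF k \<eta> s'\<bar> \<le> 10 * \<bar>s - s'\<bar>"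
  by (rule sup_diff) (rule fj_lip)

lemma FF_cont: "continuous_on A (FF k \<eta>)"
proof (rule lipschitz_on_continuous_on)
  show "10-lipschitz_on A (FF k \<eta>)"
    by (rule lipschitz_onI) (auto simp: dist_real_def FF_lip)
qed



lemma den_nz [simp]: "1 + (x::real)\<^sup>2 \<noteq> 0"
proof -
  have "0 < 1 + x\<^sup>2" by (simp add: add_pos_nonneg)
  then show ?thesis by simp
qed

lemma g_cont: "continuous_on A (\<lambda>s. 1 / (1 + ((\<alpha>::real) - s)\<^sup>2))"
  by (intro continuous_on_divide continuous_intros) auto

lemma g_has_int:
  assumes "a \<le> b"
  shows "((\<lambda>s. 1 / (1 + (\<alpha> - s)\<^sup>2)) has_integral (arctan (\<alpha> - a) - arctan (\<alpha> - b))) {a..b}"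
proof -
  have "((\<lambda>s. - arctan (\<alpha> - s)) has_vector_derivative 1 / (1 + (\<alpha> - s)\<^sup>2)) (at s within {a..b})" for s
    unfolding has_real_derivative_iff_has_vector_derivative[symmetric]
    by (auto intro!: derivative_eq_intros simp: divide_simps)
  from fundamental_theorem_of_calculus[OF assms this] show ?thesis by simp
qed

lemma g_int_le: "integral {a..b} (\<lambda>s. 1 / (1 + (\<alpha> - s)\<^sup>2)) \<le> pi"
proof (cases "a \<le> b")
  case True
  have "integral {a..b} (\<lambda>s. 1 / (1 + (\<alpha> - s)\<^sup>2)) = arctan (\<alpha> - a) - arctan (\<alpha> - b)"
    by (rule integral_unique[OF g_has_int[OF True]])
  also have "\<dots> \<le> pi" using arctan_bounded[of "\<alpha> - a"] arctan_bounded[of "\<alpha> - b"] by linarith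
  finally show ?thesis .
next
  case False
  then have "{a..b} = {}" by auto
  then show ?thesis by simp
qed

lemma fj_cont: "continuous_on A (fj k \<eta> j)"
  unfolding fj_alt[abs_def] by (intro continuous_intros g_cont)

lemma fj_int_le: "integral {a..b} (fj k \<eta> j) \<le> 10 * pi * (1 / jbr1 (real_of_int (k - j)) ^ 3)"
proof -
  let ?c = "1 / jbr1 (real_of_int (k - j)) ^ 3"
  let ?g = "\<lambda>s. 1 / (1 + (\<eta> / real_of_int j - s)\<^sup>2)"
  have c: "0 \<le> ?c" using cj_pos less_imp_le by blast
  have "fj k \<eta> j = (\<lambda>s. (10 * ?c) * ?g s)" by (rule ext) (simp add: fj_alt)
  then have "integral {a..b} (fj k \<eta> j) = (10 * ?c) * integral {a..b} ?g"
    using integral_mult[OF integrable_continuous_interval[OF g_cont], of "10 * ?c"] by simp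
  also have "\<dots> \<le> (10 * ?c) * pi" by (rule mult_left_mono[OF g_int_le]) (use c in simp)
  finally show ?thesis by (simp add: algebra_simps)
qed

lemma sum_int_bound: "(\<Sum>m\<in>{-int n..int n}. 1 / (1 + (real_of_int m)\<^sup>2)) \<le> 5 - 4 / (real n + 1)"
proof (induction n)
  case 0
  then show ?case by simp
next
  case (Suc n)
  have set: "{-int (Suc n)..int (Suc n)} = insert (-(int n + 1)) (insert (int n + 1) {-int n..int n})"
    by auto
  have "(\<Sum>m\<in>{-int (Suc n)..int (Suc n)}. 1 / (1 + (real_of_int m)\<^sup>2))
      = 2 / (1 + (real n + 1)\<^sup>2) + (\<Sum>m\<in>{-int n..int n}. 1 / (1 + (real_of_int m)\<^sup>2))"
  proof -
    have "(- real n - 1)\<^sup>2 = (real n + 1)\<^sup>2" by (simp add: power2_eq_square algebra_simps)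
    then show ?thesis unfolding set by simp
  qed
  also have "\<dots> \<le> 2 / (1 + (real n + 1)\<^sup>2) + (5 - 4 / (real n + 1))" using Suc by simp
  also have "\<dots> \<le> 5 - 4 / (real (Suc n) + 1)"
  proof -
    define x where "x = real n + 1"
    have x: "x \<ge> 1" by (simp add: x_def)
    have "2 / (1 + x\<^sup>2) \<le> 4 / x - 4 / (x + 1)"
    proof -
      have e: "4 / x - 4 / (x + 1) = 4 / (x * (x + 1))" using x by (simp add: field_simps)
      have "2 * (x * (x + 1)) \<le> 4 * (1 + x\<^sup>2)" 
      proof -
        have "x * 1 \<le> x * x" using x by (intro mult_left_mono) auto
        then show ?thesis by (simp add: power2_eq_square algebra_simps)
      qed
      then show ?thesis unfolding e using x
        by (simp add: frac_le_eq add_pos_nonneg divide_simps)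
    qed
    then show ?thesis by (simp add: x_def)
  qed
  finally show ?case .
qed

lemma sum_finite_bound:
  assumes "finite F"
  shows "(\<Sum>m\<in>F. 1 / (1 + (real_of_int m)\<^sup>2)) \<le> 5"
proof -
  define M where "M = (\<Sum>m\<in>F. \<bar>m\<bar>)"
  have M0: "0 \<le> M" unfolding M_def by (simp add: sum_nonneg)
  have sub: "F \<subseteq> {-int (nat M)..int (nat M)}"
  proof
    fix m assume m: "m \<in> F"
    have "\<bar>m\<bar> \<le> M" unfolding M_def by (rule member_le_sum[OF m]) (use assms in auto)
    then show "m \<in> {-int (nat M)..int (nat M)}" using M0 by auto
  qed
  have "(\<Sum>m\<in>F. 1 / (1 + (real_of_int m)\<^sup>2)) \<le> (\<Sum>m\<in>{-int (nat M)..int (nat M)}. 1 / (1 + (real_of_int m)\<^sup>2))"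
    by (rule sum_mono2[OF _ sub]) (auto simp: add_pos_nonneg less_imp_le)
  also have "\<dots> \<le> 5 - 4 / (real (nat M) + 1)" by (rule sum_int_bound)
  also have "\<dots> \<le> 5" by simp
  finally show ?thesis .
qed

lemma dom_bound:
  fixes \<phi> :: "real \<Rightarrow> real" and P :: "nat \<Rightarrow> real \<Rightarrow> real"
  assumes c\<phi>: "continuous_on {a..b} \<phi>" and cP: "\<And>N. continuous_on {a..b} (P N)"
    and \<phi>0: "\<And>s. s \<in> {a..b} \<Longrightarrow> 0 \<le> \<phi> s" and P0: "\<And>N s. s \<in> {a..b} \<Longrightarrow> 0 \<le> P N s"
    and iP: "\<And>N. integral {a..b} (P N) \<le> B"
    and ap: "\<And>s e. s \<in> {a..b} \<Longrightarrow> e > 0 \<Longrightarrow> \<exists>N0. \<forall>N\<ge>N0. \<phi> s \<le> P N s + e"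
  shows "integral {a..b} \<phi> \<le> B"
proof -
  define g where "g N s = min (\<phi> s) (P N s)" for N s
  have cg: "continuous_on {a..b} (g N)" for N unfolding g_def by (intro continuous_on_min c\<phi> cP)
  have ig: "g N integrable_on {a..b}" for N by (rule integrable_continuous_interval[OF cg])
  have i\<phi>: "\<phi> integrable_on {a..b}" by (rule integrable_continuous_interval[OF c\<phi>])
  have le: "norm (g N s) \<le> \<phi> s" if "s \<in> {a..b}" for N s
    using \<phi>0[OF that] P0[OF that] by (auto simp: g_def)
  have conv: "(\<lambda>N. g N s) \<longlonglongrightarrow> \<phi> s" if s: "s \<in> {a..b}" for s
  proof (rule LIMSEQ_I)
    fix r :: real assume r: "0 < r"
    obtain N0 where N0: "\<forall>N\<ge>N0. \<phi> s \<le> P N s + r / 2" using ap[OF s, of "r/2"] r by auto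
    have "norm (g N s - \<phi> s) < r" if "N \<ge> N0" for N
    proof -
      have "g N s \<le> \<phi> s" "\<phi> s - r / 2 \<le> g N s" using N0 that r by (auto simp: g_def)
      then show ?thesis using r by simp
    qed
    then show "\<exists>no. \<forall>n\<ge>no. norm (g n s - \<phi> s) < r" by blast
  qed
  have lim: "(\<lambda>N. integral {a..b} (g N)) \<longlonglongrightarrow> integral {a..b} \<phi>"
    by (rule dominated_convergence(2)[OF ig i\<phi> le conv])
  have "integral {a..b} (g N) \<le> B" for N
  proof -
    have "integral {a..b} (g N) \<le> integral {a..b} (P N)"
      by (rule integral_le[OF ig integrable_continuous_interval[OF cP]]) (simp add: g_def)
    then show ?thesis using iP[of N] by linarith
  qed
  then show ?thesis by (intro LIMSEQ_le_const2[OF lim]) auto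
qed



definition JJ :: "nat \<Rightarrow> int set" where "JJ N = {-int N..int N} - {0}"

lemma JJ_finite: "finite (JJ N)" by (simp add: JJ_def)

lemma JJ_mem: "j \<noteq> 0 \<Longrightarrow> nat \<bar>j\<bar> \<le> N \<Longrightarrow> j \<in> JJ N"
  by (auto simp: JJ_def)

lemma JJ_nz: "j \<in> JJ N \<Longrightarrow> j \<noteq> 0" by (simp add: JJ_def)

lemma FF_ap:
  assumes e: "e > 0"
  shows "\<exists>N0. \<forall>N\<ge>N0. FF k \<eta> s \<le> (\<Sum>j\<in>JJ N. fj k \<eta> j s) + e"
proof -
  obtain j where j: "j \<noteq> 0" "FF k \<eta> s - e < fj k \<eta> j s" using FF_approx[OF e] by blast
  have "FF k \<eta> s \<le> (\<Sum>j\<in>JJ N. fj k \<eta> j s) + e" if N: "N \<ge> nat \<bar>j\<bar>" for N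
  proof -
    have "fj k \<eta> j s \<le> (\<Sum>j\<in>JJ N. fj k \<eta> j s)"
      by (rule member_le_sum) (use JJ_mem[OF j(1) N] JJ_finite fj_nonneg in auto)
    then show ?thesis using j by linarith
  qed
  then show ?thesis by blast
qed

lemma sum_cj_bound: "(\<Sum>j\<in>JJ N. 1 / jbr1 (real_of_int (k - j)) ^ 3) \<le> 5"
proof -
  have "(\<Sum>j\<in>JJ N. 1 / jbr1 (real_of_int (k - j)) ^ 3) \<le> (\<Sum>j\<in>JJ N. 1 / (1 + (real_of_int (k - j))\<^sup>2))"
    by (rule sum_mono) (rule cj_le_sq)
  also have "\<dots> = (\<Sum>m\<in>(\<lambda>j. k - j) ` JJ N. 1 / (1 + (real_of_int m)\<^sup>2))"
    by (subst sum.reindex) (auto simp: inj_on_def)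
  also have "\<dots> \<le> 5" by (rule sum_finite_bound) (simp add: JJ_finite)
  finally show ?thesis .
qed

lemma FF_int_le: "integral {a..b} (FF k \<eta>) \<le> 50 * pi"
proof (rule dom_bound[where P = "\<lambda>N s. \<Sum>j\<in>JJ N. fj k \<eta> j s"])
  show "continuous_on {a..b} (FF k \<eta>)" by (rule FF_cont)
  show "continuous_on {a..b} (\<lambda>s. \<Sum>j\<in>JJ N. fj k \<eta> j s)" for N
    by (intro continuous_on_sum fj_cont)
  show "0 \<le> FF k \<eta> s" for s by (rule FF_nonneg)
  show "0 \<le> (\<Sum>j\<in>JJ N. fj k \<eta> j s)" for N s by (intro sum_nonneg fj_nonneg)
  show "\<exists>N0. \<forall>N\<ge>N0. FF k \<eta> s \<le> (\<Sum>j\<in>JJ N. fj k \<eta> j s) + e" if "e > 0" for s e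
    by (rule FF_ap[OF that])
  show "integral {a..b} (\<lambda>s. \<Sum>j\<in>JJ N. fj k \<eta> j s) \<le> 50 * pi" for N
  proof -
    have "integral {a..b} (\<lambda>s. \<Sum>j\<in>JJ N. fj k \<eta> j s) = (\<Sum>j\<in>JJ N. integral {a..b} (fj k \<eta> j))"
      by (rule integral_sum) (auto simp: JJ_finite intro: integrable_continuous_interval fj_cont)
    also have "\<dots> \<le> (\<Sum>j\<in>JJ N. 10 * pi * (1 / jbr1 (real_of_int (k - j)) ^ 3))"
      by (rule sum_mono) (rule fj_int_le)
    also have "\<dots> = 10 * pi * (\<Sum>j\<in>JJ N. 1 / jbr1 (real_of_int (k - j)) ^ 3)"
      by (simp add: sum_distrib_left)
    also have "\<dots> \<le> 10 * pi * 5" by (rule mult_left_mono[OF sum_cj_bound]) simp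
    finally show ?thesis by simp
  qed
qed

lemma sqrt_le_iff_sq: "0 \<le> y \<Longrightarrow> sqrt x \<le> y \<longleftrightarrow> x \<le> y\<^sup>2"
  by (metis real_sqrt_le_iff real_sqrt_unique real_le_rsqrt real_sqrt_le_mono)

definition s0 :: "int \<Rightarrow> real \<Rightarrow> real" where
  "s0 k \<eta> = sqrt ((\<bar>real_of_int k\<bar> + \<bar>\<eta>\<bar>) / 10)"

lemma s0_nonneg: "0 \<le> s0 k \<eta>" by (simp add: s0_def)

lemma s0_sq: "(s0 k \<eta>)\<^sup>2 = (\<bar>real_of_int k\<bar> + \<bar>\<eta>\<bar>) / 10" by (simp add: s0_def)

lemma I_eq: "integral {0..t} (\<lambda>s. mrate s k \<eta>) = integral {s0 k \<eta>..t} (FF k \<eta>)"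
proof -
  let ?T = "{s. (k, \<eta>) \<in> S s}"
  have "integral {0..t} (\<lambda>s. mrate s k \<eta>) = integral {0..t} (\<lambda>s. if s \<in> ?T then FF k \<eta> s else 0)"
    by (simp add: mrate_eq)
  also have "\<dots> = integral (?T \<inter> {0..t}) (FF k \<eta>)" by (rule integral_restrict_Int)
  also have "?T \<inter> {0..t} = {s0 k \<eta>..t}"
  proof (intro set_eqI iffI)
    fix s assume s: "s \<in> ?T \<inter> {0..t}"
    then have "\<bar>real_of_int k\<bar> + \<bar>\<eta>\<bar> \<le> 10 * s\<^sup>2" "0 \<le> s" "s \<le> t" by (auto simp: S_def)
    then show "s \<in> {s0 k \<eta>..t}" unfolding s0_def by (auto simp: sqrt_le_iff_sq)
  next
    fix s assume s: "s \<in> {s0 k \<eta>..t}"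
    then have "0 \<le> s" using s0_nonneg[of k \<eta>] by auto
    with s have "\<bar>real_of_int k\<bar> + \<bar>\<eta>\<bar> \<le> 10 * s\<^sup>2" unfolding s0_def by (auto simp: sqrt_le_iff_sq)
    with s \<open>0 \<le> s\<close> show "s \<in> ?T \<inter> {0..t}" by (auto simp: S_def)
  qed
  finally show ?thesis .
qed

lemma mw_eq: "mw t k \<eta> = exp (integral {s0 k \<eta>..t} (FF k \<eta>))"
  by (simp add: mw_def I_eq)

lemma I_nonneg: "0 \<le> integral {a..b} (FF k \<eta>)"
  by (rule integral_nonneg) (auto intro: integrable_continuous_interval FF_cont FF_nonneg)

lemma part1: "\<exists>C::real. \<forall>t\<ge>0. \<forall>k \<eta>. 1 \<le> mw t k \<eta> \<and> mw t k \<eta> \<le> C"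
proof (intro exI allI impI conjI)
  fix t :: real and k \<eta>
  show "1 \<le> mw t k \<eta>" unfolding mw_eq using I_nonneg by simp
  show "mw t k \<eta> \<le> exp (50 * pi)" unfolding mw_eq using FF_int_le by simp
qed



lemma jbr_ge1: "jbr a x \<ge> 1"
  unfolding jbr_def by simp

lemma jbr_ge_abs2: "\<bar>x\<bar> \<le> jbr a x"
proof -
  have "sqrt (x\<^sup>2) \<le> jbr a x" unfolding jbr_def by (rule real_sqrt_le_mono) simp
  then show ?thesis by simp
qed

lemma jbr_ge_abs1: "\<bar>real_of_int a\<bar> \<le> jbr a x"
proof -
  have "sqrt ((real_of_int a)\<^sup>2) \<le> jbr a x" unfolding jbr_def by (rule real_sqrt_le_mono) simp
  then show ?thesis by simp
qed

lemma jbr_ge_jbr1: "jbr1 (real_of_int (-a)) \<le> jbr a x"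
  unfolding jbr_def jbr1_def by (rule real_sqrt_le_mono) simp

lemma mrate_ge:
  assumes "(l, \<xi>) \<in> S t" "k \<noteq> 0"
  shows "fj l \<xi> k t \<le> mrate t l \<xi>"
  using assms FF_ge[OF assms(2)] by (simp add: mrate_eq)

lemma part2_core:
  assumes k: "k \<noteq> 0" and lS: "(l, \<xi>) \<in> S t"
  shows "1 / (1 + \<bar>t - \<eta> / real_of_int k\<bar>) \<le> sqrt (mrate t l \<xi>) * jbr (k - l) (\<eta> - \<xi>) ^ 3"
proof -
  define D where "D = 1 + \<bar>t - \<eta> / real_of_int k\<bar>"
  define J where "J = jbr (k - l) (\<eta> - \<xi>)"
  define M where "M = mrate t l \<xi>"
  have D1: "D \<ge> 1" by (simp add: D_def)
  have J1: "J \<ge> 1" by (simp add: J_def jbr_ge1)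
  have Jd: "\<bar>\<eta> - \<xi>\<bar> \<le> J" by (simp add: J_def jbr_ge_abs2)
  have Jl: "jbr1 (real_of_int (l - k)) \<le> J" unfolding J_def using jbr_ge_jbr1[of "k - l" "\<eta> - \<xi>"] by simp
  have K1: "1 \<le> \<bar>real_of_int k\<bar>" using k by linarith
  have q: "\<bar>(\<xi> - \<eta>) / real_of_int k\<bar> \<le> \<bar>\<eta> - \<xi>\<bar>"
    using K1 k by (simp add: abs_minus_commute divide_le_eq_1 abs_divide divide_le_eq mult_left_mono[of 1 _ "\<bar>\<eta> - \<xi>\<bar>", simplified] )
  have "\<xi> / real_of_int k - t = (\<xi> - \<eta>) / real_of_int k + (\<eta> / real_of_int k - t)"
    by (simp add: diff_divide_distrib)
  then have a: "\<bar>\<xi> / real_of_int k - t\<bar> \<le> \<bar>\<eta> - \<xi>\<bar> + (D - 1)"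
    using q unfolding D_def by (smt (verit))
  have b: "1 + \<bar>\<xi> / real_of_int k - t\<bar> \<le> 2 * D * J"
  proof -
    have "1 + \<bar>\<xi> / real_of_int k - t\<bar> \<le> D + \<bar>\<eta> - \<xi>\<bar>" using a by linarith
    also have "\<dots> \<le> D + D * J" 
    proof -
      have "1 * J \<le> D * J" using D1 J1 by (intro mult_right_mono) auto
      then show ?thesis using Jd by linarith
    qed
    also have "\<dots> \<le> 2 * D * J" 
    proof -
      have "D * 1 \<le> D * J" using D1 J1 by (intro mult_left_mono) auto
      then show ?thesis by linarith
    qed
    finally show ?thesis .
  qed
  have c: "1 + (\<xi> / real_of_int k - t)\<^sup>2 \<le> (2 * D * J)\<^sup>2"
  proof -
    have "1 + (\<xi> / real_of_int k - t)\<^sup>2 \<le> (1 + \<bar>\<xi> / real_of_int k - t\<bar>)\<^sup>2"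
      by (simp add: power2_eq_square algebra_simps)
    also have "\<dots> \<le> (2 * D * J)\<^sup>2" by (rule power_mono[OF b]) simp
    finally show ?thesis .
  qed
  have DJ: "0 < D" "0 < J" using D1 J1 by auto
  have f1: "10 / (2 * D * J)\<^sup>2 \<le> 10 / (1 + (\<xi> / real_of_int k - t)\<^sup>2)"
    by (rule divide_left_mono[OF c]) (use DJ in \<open>auto intro!: mult_pos_pos simp: add_pos_nonneg\<close>)
  have f2: "1 / J ^ 3 \<le> 1 / jbr1 (real_of_int (l - k)) ^ 3"
    using jbr1_ge1[of "real_of_int (l - k)"] DJ by (intro divide_left_mono power_mono Jl) (auto intro!: mult_pos_pos)
  have "10 / (2 * D * J)\<^sup>2 * (1 / J ^ 3) \<le> fj l \<xi> k t"
    unfolding fj_def by (rule mult_mono[OF f1 f2]) (use jbr1_ge1[of "real_of_int (l - k)"] DJ in auto)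
  also have "\<dots> \<le> M" unfolding M_def by (rule mrate_ge[OF lS k])
  finally have M: "10 / (2 * D * J)\<^sup>2 * (1 / J ^ 3) \<le> M" .
  have "(1 / D)\<^sup>2 \<le> M * (J ^ 3)\<^sup>2"
  proof -
    have "10 / (2 * D * J)\<^sup>2 * (1 / J ^ 3) * (J ^ 3)\<^sup>2 = (5/2) * J / D\<^sup>2"
      using DJ by (simp add: field_simps power2_eq_square power3_eq_cube)
    moreover have "(1 / D)\<^sup>2 \<le> (5/2) * J / D\<^sup>2"
      using DJ J1 by (simp add: field_simps power2_eq_square)
    moreover have "10 / (2 * D * J)\<^sup>2 * (1 / J ^ 3) * (J ^ 3)\<^sup>2 \<le> M * (J ^ 3)\<^sup>2"
      by (rule mult_right_mono[OF M]) simp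
    ultimately show ?thesis by linarith
  qed
  then have "sqrt ((1 / D)\<^sup>2) \<le> sqrt (M * (J ^ 3)\<^sup>2)" by (rule real_sqrt_le_mono)
  moreover have "sqrt ((1 / D)\<^sup>2) = 1 / D" using DJ by simp
  moreover have "sqrt (M * (J ^ 3)\<^sup>2) = sqrt M * J ^ 3"
    by (metis real_sqrt_mult real_sqrt_abs abs_of_pos zero_less_power DJ(2))
  ultimately have "1 / D \<le> sqrt M * J ^ 3" by simp
  then show ?thesis by (simp add: D_def M_def J_def)
qed



lemma iii_alg:
  fixes t K r D Q W J :: real
  assumes t1: "t \<ge> 1" and K1: "K \<ge> 1" and D: "D = 1 + \<bar>t - r\<bar>" and Q1: "Q \<ge> 1"
    and Qr: "r \<ge> 0 \<Longrightarrow> sqrt r \<le> Q * K"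
    and W1: "W \<ge> 1" and J1: "J \<ge> 1"
    and key: "\<bar>t - r\<bar> < t / 2 \<Longrightarrow> K < t \<Longrightarrow> sqrt t / D \<le> W * J ^ 5"
  shows "2 * (1 + \<bar>r\<bar>) / (K * D\<^sup>2) \<le> 10 * (Q / D * W * J ^ 5)"
proof -
  have D1: "D \<ge> 1" using D by simp
  have WJ: "1 \<le> W * J ^ 5"
  proof -
    have "1 \<le> J ^ 5" using J1 by (simp add: one_le_power)
    then show ?thesis using W1 mult_mono[of 1 W 1 "J^5"] by simp
  qed
  have R: "1 / D \<le> Q / D * W * J ^ 5"
  proof -
    have "1 / D \<le> Q / D" using D1 Q1 by (simp add: divide_right_mono)
    also have "\<dots> = Q / D * 1" by simp
    also have "\<dots> \<le> Q / D * (W * J ^ 5)" using WJ Q1 D1 by (intro mult_left_mono) auto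
    finally show ?thesis by (simp add: mult.assoc)
  qed
  show ?thesis
  proof (cases "\<bar>t - r\<bar> < t / 2")
    case False
    then have "1 + \<bar>r\<bar> \<le> 3 * D" using D t1 by linarith
    then have "2 * (1 + \<bar>r\<bar>) / (K * D\<^sup>2) \<le> 2 * (3 * D) / (K * D\<^sup>2)"
      using K1 D1 by (intro divide_right_mono) auto
    also have "\<dots> = 6 / (K * D)" using D1 by (simp add: power2_eq_square)
    also have "\<dots> \<le> 6 / D" using K1 D1 by (simp add: frac_le)
    also have "\<dots> \<le> 10 * (Q / D * W * J ^ 5)" using R D1 by (simp add: divide_le_eq)
    finally show ?thesis .
  next
    case True
    then have r1: "1 + \<bar>r\<bar> \<le> 5 / 2 * t" and r0: "t / 2 \<le> r" using t1 by linarith+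
    show ?thesis
    proof (cases "K < t")
      case False
      have "2 * (1 + \<bar>r\<bar>) / (K * D\<^sup>2) \<le> 2 * (5 / 2 * K) / (K * D\<^sup>2)"
        using K1 D1 r1 False by (intro divide_right_mono) auto
      also have "\<dots> = 5 / D\<^sup>2" using K1 by simp
      also have "\<dots> \<le> 5 / D" using D1 by (simp add: power2_eq_square frac_le)
      also have "\<dots> \<le> 10 * (Q / D * W * J ^ 5)" using R D1 by (simp add: divide_le_eq)
      finally show ?thesis .
    next
      case Kt: True
      have key': "sqrt t / D \<le> W * J ^ 5" by (rule key[OF True Kt])
      have st: "sqrt t \<le> 2 * (Q * K)"
      proof -
        have "sqrt t \<le> sqrt (4 * r)" using r0 t1 by (intro real_sqrt_le_mono) linarith
        also have "\<dots> = 2 * sqrt r" by (simp add: real_sqrt_mult)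
        also have "\<dots> \<le> 2 * (Q * K)" using Qr r0 t1 by simp
        finally show ?thesis .
      qed
      have st0: "0 \<le> sqrt t / D" using D1 t1 by simp
      have "2 * (1 + \<bar>r\<bar>) / (K * D\<^sup>2) \<le> 2 * (5 / 2 * t) / (K * D\<^sup>2)"
        using K1 D1 r1 by (intro divide_right_mono) auto
      also have "\<dots> = 5 / K * ((sqrt t / D) * (sqrt t / D))"
        using K1 D1 t1 by (simp add: power2_eq_square field_simps)
      also have "\<dots> \<le> 5 / K * ((2 * (Q * K) / D) * (W * J ^ 5))"
        using K1 D1 st st0 key' Q1 by (intro mult_left_mono mult_mono divide_right_mono) auto
      also have "\<dots> = 10 * (Q / D * W * J ^ 5)" using K1 D1 by (simp add: field_simps)
      finally show ?thesis .
    qed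
  qed
qed



lemma mrate_nonneg: "0 \<le> mrate t l \<xi>"
  by (simp add: mrate_eq FF_nonneg)

lemma part3_core:
  assumes t1: "t \<ge> 1" and k: "k \<noteq> 0"
  shows "(\<bar>real_of_int k\<bar> + \<bar>\<eta>\<bar>) / (real_of_int k)\<^sup>2 * (1 / (1 + \<bar>t - \<eta> / real_of_int k\<bar>\<^sup>2))
          \<le> 10 * (sqrt (jbr1 (\<eta> / (real_of_int k) ^ 3)) / (1 + \<bar>t - \<eta> / real_of_int k\<bar>)
                  * (1 + sqrt t * sqrt (mrate t l \<xi>)) * jbr (k - l) (\<eta> - \<xi>) ^ 5
                 + 1 / (jbr1 t)\<^sup>2)"
proof -
  define K where "K = \<bar>real_of_int k\<bar>"
  define r where "r = \<eta> / real_of_int k"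
  define D where "D = 1 + \<bar>t - r\<bar>"
  define Q where "Q = sqrt (jbr1 (\<eta> / (real_of_int k) ^ 3))"
  define M where "M = mrate t l \<xi>"
  define W where "W = 1 + sqrt t * sqrt M"
  define J where "J = jbr (k - l) (\<eta> - \<xi>)"
  have K1: "K \<ge> 1" using k by (simp add: K_def)
  have kr: "real_of_int k \<noteq> 0" using k by simp
  have eta: "\<eta> = r * real_of_int k" using kr by (simp add: r_def)
  have D1: "D \<ge> 1" by (simp add: D_def)
  have M0: "0 \<le> M" by (simp add: M_def mrate_nonneg)
  have W1: "W \<ge> 1" using M0 t1 by (simp add: W_def)
  have J1: "J \<ge> 1" by (simp add: J_def jbr_ge1)
  have Q1: "Q \<ge> 1" using jbr1_ge1 by (simp add: Q_def)
  have Qr: "sqrt r \<le> Q * K" if r0: "r \<ge> 0"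
  proof -
    have "\<eta> / (real_of_int k) ^ 3 = r / K\<^sup>2" using kr
      by (simp add: r_def K_def power2_eq_square power3_eq_cube)
    then have "r / K\<^sup>2 \<le> jbr1 (\<eta> / (real_of_int k) ^ 3)"
      using jbr1_ge_abs[of "\<eta> / (real_of_int k) ^ 3"] r0 by simp
    then have "sqrt (r / K\<^sup>2) \<le> Q" unfolding Q_def by (rule real_sqrt_le_mono)
    moreover have "sqrt (r / K\<^sup>2) = sqrt r / K" using K1 by (simp add: real_sqrt_divide)
    ultimately show ?thesis using K1 by (simp add: divide_le_eq)
  qed
  have key: "sqrt t / D \<le> W * J ^ 5" if h1: "\<bar>t - r\<bar> < t / 2" and h2: "K < t"
  proof (cases "(l, \<xi>) \<in> S t")
    case True
    have "1 / D \<le> sqrt M * J ^ 3"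
      using part2_core[OF k True, of \<eta>] by (simp add: D_def r_def M_def J_def)
    then have "sqrt t * (1 / D) \<le> sqrt t * (sqrt M * J ^ 3)" by (rule mult_left_mono) (use t1 in simp)
    also have "\<dots> = (sqrt t * sqrt M) * J ^ 3" by simp
    also have "\<dots> \<le> W * J ^ 5"
    proof (rule mult_mono)
      show "sqrt t * sqrt M \<le> W" by (simp add: W_def)
      show "J ^ 3 \<le> J ^ 5" using J1 by (intro power_increasing) auto
    qed (use W1 M0 J1 in auto)
    finally show ?thesis by simp
  next
    case False
    then have lx: "10 * t\<^sup>2 < \<bar>real_of_int l\<bar> + \<bar>\<xi>\<bar>" by (simp add: S_def)
    have r15: "\<bar>r\<bar> \<le> 3 / 2 * t" using h1 t1 by linarith
    have "\<bar>\<eta>\<bar> = K * \<bar>r\<bar>" by (simp add: eta K_def abs_mult)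
    also have "\<dots> \<le> t * (3 / 2 * t)" using h2 r15 K1 by (intro mult_mono) auto
    finally have etab: "\<bar>\<eta>\<bar> \<le> 3 / 2 * t\<^sup>2" by (simp add: power2_eq_square)
    have J2: "\<bar>real_of_int k - real_of_int l\<bar> \<le> J" using jbr_ge_abs1[of "k - l" "\<eta> - \<xi>"] by (simp add: J_def)
    have J3: "\<bar>\<eta> - \<xi>\<bar> \<le> J" using jbr_ge_abs2[of "\<eta> - \<xi>" "k - l"] by (simp add: J_def)
    have "\<bar>real_of_int l\<bar> \<le> K + \<bar>real_of_int k - real_of_int l\<bar>" by (simp add: K_def)
    moreover have "\<bar>\<xi>\<bar> \<le> \<bar>\<eta>\<bar> + \<bar>\<eta> - \<xi>\<bar>" by simp
    ultimately have "10 * t\<^sup>2 < t + 3 / 2 * t\<^sup>2 + 2 * J" using lx J2 J3 etab h2 by linarith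
    moreover have "t \<le> t\<^sup>2" using t1 by (simp add: power2_eq_square)
    ultimately have Jt: "t \<le> J" using t1 by linarith
    have "sqrt t / D \<le> sqrt t" using D1 t1 by (simp add: divide_le_eq mult_le_cancel_left1)
    also have "\<dots> \<le> t" using t1 by (simp add: real_sqrt_le_iff' sqrt_le_iff_sq power2_eq_square)
    also have "\<dots> \<le> J" by (rule Jt)
    also have "\<dots> \<le> J ^ 5"
    proof -
      have "J ^ 1 \<le> J ^ 5" using J1 by (intro power_increasing) auto
      then show ?thesis by simp
    qed
    also have "\<dots> \<le> W * J ^ 5" using W1 J1 mult_right_mono[of 1 W "J^5"] by simp
    finally show ?thesis .
  qed
  have main: "2 * (1 + \<bar>r\<bar>) / (K * D\<^sup>2) \<le> 10 * (Q / D * W * J ^ 5)"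
    by (rule iii_alg[OF t1 K1 D_def Q1 Qr W1 J1 key])
  have L: "(\<bar>real_of_int k\<bar> + \<bar>\<eta>\<bar>) / (real_of_int k)\<^sup>2 * (1 / (1 + \<bar>t - \<eta> / real_of_int k\<bar>\<^sup>2))
           \<le> 2 * (1 + \<bar>r\<bar>) / (K * D\<^sup>2)"
  proof -
    have e1: "(\<bar>real_of_int k\<bar> + \<bar>\<eta>\<bar>) / (real_of_int k)\<^sup>2 = (1 + \<bar>r\<bar>) / K"
      using K1 kr by (simp add: eta K_def abs_mult field_simps power2_eq_square)
    have e2: "1 / (1 + \<bar>t - \<eta> / real_of_int k\<bar>\<^sup>2) \<le> 2 / D\<^sup>2"
    proof -
      have "D\<^sup>2 \<le> 2 * (1 + \<bar>t - r\<bar>\<^sup>2)"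
      proof -
        have "0 \<le> (1 - \<bar>t - r\<bar>)\<^sup>2" by simp
        then show ?thesis by (simp add: D_def power2_eq_square algebra_simps)
      qed
      then show ?thesis using D1 by (simp add: r_def field_simps add_pos_nonneg)
    qed
    have "(\<bar>real_of_int k\<bar> + \<bar>\<eta>\<bar>) / (real_of_int k)\<^sup>2 * (1 / (1 + \<bar>t - \<eta> / real_of_int k\<bar>\<^sup>2))
          \<le> (1 + \<bar>r\<bar>) / K * (2 / D\<^sup>2)"
      unfolding e1 by (rule mult_left_mono[OF e2]) (use K1 in simp)
    also have "\<dots> = 2 * (1 + \<bar>r\<bar>) / (K * D\<^sup>2)" by simp
    finally show ?thesis .
  qed
  have "10 * (Q / D * W * J ^ 5) \<le> 10 * (Q / D * W * J ^ 5 + 1 / (jbr1 t)\<^sup>2)" by simp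
  with L main have "(\<bar>real_of_int k\<bar> + \<bar>\<eta>\<bar>) / (real_of_int k)\<^sup>2 * (1 / (1 + \<bar>t - \<eta> / real_of_int k\<bar>\<^sup>2))
     \<le> 10 * (Q / D * W * J ^ 5 + 1 / (jbr1 t)\<^sup>2)" by linarith
  then show ?thesis unfolding Q_def D_def r_def W_def M_def J_def .
qed



lemma fj_small:
  fixes k :: int and \<eta> s :: real
  assumes k: "k \<noteq> 0" and j: "j \<noteq> 0" and s0: "0 \<le> s" and A: "\<bar>real_of_int k\<bar> + \<bar>\<eta>\<bar> \<le> 10 * s\<^sup>2"
  shows "fj k \<eta> j s \<le> 2000 * s / \<bar>real_of_int k\<bar>"
proof -
  define K where "K = \<bar>real_of_int k\<bar>"
  define c where "c = 1 / jbr1 (real_of_int (k - j)) ^ 3"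
  define g where "g = 1 / (1 + (\<eta> / real_of_int j - s)\<^sup>2)"
  have K1: "1 \<le> K" using k by (simp add: K_def)
  have f: "fj k \<eta> j s = 10 * c * g" by (simp add: fj_alt c_def g_def)
  have c0: "0 \<le> c" "c \<le> 1" using cj_pos cj_le1 unfolding c_def by (auto intro: less_imp_le)
  have g0: "0 < g" "g \<le> 1" unfolding g_def by (rule g_pos, rule g_le1)
  have sK: "K \<le> 10 * s\<^sup>2" "\<bar>\<eta>\<bar> \<le> 10 * s\<^sup>2" using A by (auto simp: K_def)
  have s3: "3 / 10 \<le> s"
  proof (rule ccontr)
    assume "\<not> 3 / 10 \<le> s"
    then have "s\<^sup>2 < (3/10)\<^sup>2" using s0 by (intro power_strict_mono) auto
    then show False using sK K1 by (simp add: power2_eq_square)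
  qed
  have spos: "0 < s" using s3 by simp
  show ?thesis
  proof (cases "K \<le> 40 * s")
    case True
    have "fj k \<eta> j s \<le> 10" by (rule fj_le10)
    also have "10 \<le> 2000 * s / K" using True K1 by (simp add: le_divide_eq)
    finally show ?thesis by (simp add: K_def)
  next
    case False
    then have sK40: "40 * s < K" by simp
    have eta: "\<bar>\<eta>\<bar> \<le> s * K / 4"
    proof -
      have "10 * s\<^sup>2 = 10 * s * s" by (simp add: power2_eq_square)
      also have "\<dots> \<le> 10 * s * (K / 40)" using sK40 spos by (intro mult_left_mono) auto
      also have "10 * s * (K / 40) = s * K / 4" by simp
      finally show ?thesis using sK(2) by linarith
    qed
    show ?thesis
    proof (cases "K / 2 \<le> \<bar>real_of_int j\<bar>")
      case True
      have jpos: "0 < \<bar>real_of_int j\<bar>" using j by simp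
      have "\<bar>\<eta> / real_of_int j\<bar> = \<bar>\<eta>\<bar> / \<bar>real_of_int j\<bar>" by (simp add: abs_divide)
      also have "\<dots> \<le> \<bar>\<eta>\<bar> / (K / 2)" using True K1 by (intro divide_left_mono) auto
      also have "\<dots> \<le> (s * K / 4) / (K / 2)" using eta K1 by (intro divide_right_mono) auto
      also have "\<dots> = s / 2" using K1 by (simp add: field_simps)
      finally have ej: "\<bar>\<eta> / real_of_int j\<bar> \<le> s / 2" .
      then have "s / 2 \<le> \<bar>\<eta> / real_of_int j - s\<bar>" by linarith
      then have sq: "(s / 2)\<^sup>2 \<le> (\<eta> / real_of_int j - s)\<^sup>2"
        using spos by (metis abs_le_square_iff abs_of_nonneg less_imp_le half_gt_zero)
      have gle: "g \<le> 4 / s\<^sup>2"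
      proof -
        have "g \<le> 1 / (s / 2)\<^sup>2" unfolding g_def using sq spos by (intro divide_left_mono) (auto intro!: mult_pos_pos simp: add_pos_nonneg)
        then show ?thesis by (simp add: power2_eq_square)
      qed
      have "fj k \<eta> j s \<le> 10 * 1 * (4 / s\<^sup>2)" unfolding f using c0 g0 gle by (intro mult_mono) auto
      also have "\<dots> \<le> 2000 * s / K"
      proof -
        have "3 / 10 * (K / 10) \<le> s * s\<^sup>2" using s3 sK K1 by (intro mult_mono) auto
        then show ?thesis using spos K1 by (simp add: field_simps power2_eq_square)
      qed
      finally show ?thesis by (simp add: K_def)
    next
      case False
      have tri: "\<bar>real_of_int k\<bar> \<le> \<bar>real_of_int k - real_of_int j\<bar> + \<bar>real_of_int j\<bar>"
        using abs_triangle_ineq[of "real_of_int k - real_of_int j" "real_of_int j"] by simp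
      have "K / 2 < \<bar>real_of_int (k - j)\<bar>" using False tri unfolding K_def by simp
      also have "\<dots> \<le> jbr1 (real_of_int (k - j))" by (rule jbr1_ge_abs)
      finally have "(K / 2) ^ 3 \<le> jbr1 (real_of_int (k - j)) ^ 3" using K1 by (intro power_mono) auto
      then have cle: "c \<le> 1 / (K / 2) ^ 3" unfolding c_def using K1 jbr1_ge1[of "real_of_int (k - j)"] by (intro divide_left_mono) (auto intro!: mult_pos_pos)
      have "fj k \<eta> j s \<le> 10 * (1 / (K / 2) ^ 3) * 1" unfolding f using c0 g0 cle K1 by (intro mult_mono) auto
      also have "\<dots> \<le> 2000 * s / K"
      proof -
        have "1 \<le> K * K" using K1 by (metis mult_le_cancel_left1 order_trans less_le_trans zero_less_one mult_1_right mult_left_mono less_imp_le)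
        then have "3 / 10 * 1 \<le> s * (K * K)" using s3 by (intro mult_mono) auto
        then show ?thesis using spos K1 by (simp add: field_simps power3_eq_cube)
      qed
      finally show ?thesis by (simp add: K_def)
    qed
  qed
qed

lemma FF_small:
  assumes k: "k \<noteq> 0" and s0: "0 \<le> s" and A: "\<bar>real_of_int k\<bar> + \<bar>\<eta>\<bar> \<le> 10 * s\<^sup>2"
  shows "FF k \<eta> s \<le> 2000 * s / \<bar>real_of_int k\<bar>"
  unfolding FF_def by (rule cSUP_least[OF ne_nz]) (use fj_small[OF k _ s0 A] in auto)



lemma g_diff2: "\<bar>1 / (1 + x\<^sup>2) - 1 / (1 + y\<^sup>2)\<bar> \<le> \<bar>x - y\<bar> * (1 / (1 + x\<^sup>2) + 1 / (1 + (y::real)\<^sup>2))"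
proof -
  have px: "0 < 1 + x\<^sup>2" "0 < 1 + y\<^sup>2" by (auto simp: add_pos_nonneg)
  have h: "\<bar>y + x\<bar> \<le> 2 + x\<^sup>2 + y\<^sup>2"
  proof -
    have "\<bar>y + x\<bar> \<le> \<bar>y\<bar> + \<bar>x\<bar>" by (rule abs_triangle_ineq)
    also have "\<dots> \<le> (1 + y\<^sup>2) / 2 + (1 + x\<^sup>2) / 2" by (rule add_mono[OF abs_le_half abs_le_half])
    also have "\<dots> \<le> 2 + x\<^sup>2 + y\<^sup>2" using zero_le_power2[of x] zero_le_power2[of y] by (simp add: field_simps)
    finally show ?thesis .
  qed
  have e: "1 / (1 + x\<^sup>2) + 1 / (1 + y\<^sup>2) = (2 + x\<^sup>2 + y\<^sup>2) / ((1 + x\<^sup>2) * (1 + y\<^sup>2))"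
    using px by (simp add: field_simps)
  have "\<bar>1 / (1 + x\<^sup>2) - 1 / (1 + y\<^sup>2)\<bar> = \<bar>y - x\<bar> * \<bar>y + x\<bar> / ((1 + x\<^sup>2) * (1 + y\<^sup>2))"
    using px by (simp add: g_diff_eq abs_mult)
  also have "\<dots> \<le> \<bar>y - x\<bar> * (2 + x\<^sup>2 + y\<^sup>2) / ((1 + x\<^sup>2) * (1 + y\<^sup>2))"
    using px h by (intro divide_right_mono mult_left_mono) auto
  also have "\<dots> = \<bar>x - y\<bar> * (1 / (1 + x\<^sup>2) + 1 / (1 + y\<^sup>2))"
    unfolding e by (simp add: abs_minus_commute)
  finally show ?thesis .
qed

lemma Dj_int:
  assumes j: "j \<noteq> 0"
  shows "integral {a..b} (\<lambda>s. \<bar>fj k \<eta> j s - fj k \<xi> j s\<bar>)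
           \<le> 20 * pi * (1 / jbr1 (real_of_int (k - j)) ^ 3) * (\<bar>\<eta> - \<xi>\<bar> / \<bar>real_of_int j\<bar>)"
proof -
  define c where "c = 1 / jbr1 (real_of_int (k - j)) ^ 3"
  define \<alpha> where "\<alpha> = \<eta> / real_of_int j"
  define \<beta> where "\<beta> = \<xi> / real_of_int j"
  define d where "d = \<bar>\<alpha> - \<beta>\<bar>"
  have c0: "0 \<le> c" unfolding c_def using cj_pos less_imp_le by blast
  have d0: "0 \<le> d" by (simp add: d_def)
  have dd: "d = \<bar>\<eta> - \<xi>\<bar> / \<bar>real_of_int j\<bar>" by (simp add: d_def \<alpha>_def \<beta>_def diff_divide_distrib[symmetric] abs_divide)
  let ?G = "\<lambda>s. (10 * c * d) * (1 / (1 + (\<alpha> - s)\<^sup>2)) + (10 * c * d) * (1 / (1 + (\<beta> - s)\<^sup>2))"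
  have pt: "\<bar>fj k \<eta> j s - fj k \<xi> j s\<bar> \<le> ?G s" for s
  proof -
    have "fj k \<eta> j s - fj k \<xi> j s = (10 * c) * (1 / (1 + (\<alpha> - s)\<^sup>2) - 1 / (1 + (\<beta> - s)\<^sup>2))"
      unfolding fj_alt c_def \<alpha>_def \<beta>_def by (simp only: right_diff_distrib)
    then have "\<bar>fj k \<eta> j s - fj k \<xi> j s\<bar> = (10 * c) * \<bar>1 / (1 + (\<alpha> - s)\<^sup>2) - 1 / (1 + (\<beta> - s)\<^sup>2)\<bar>"
      using c0 by (simp add: abs_mult)
    also have "\<dots> \<le> (10 * c) * (\<bar>(\<alpha> - s) - (\<beta> - s)\<bar> * (1 / (1 + (\<alpha> - s)\<^sup>2) + 1 / (1 + (\<beta> - s)\<^sup>2)))"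
      using c0 by (intro mult_left_mono g_diff2) auto
    also have "\<dots> = ?G s" by (simp add: d_def algebra_simps)
    finally show ?thesis .
  qed
  have iG: "?G integrable_on {a..b}"
    by (intro integrable_continuous_interval continuous_intros g_cont)
  have iD: "(\<lambda>s. \<bar>fj k \<eta> j s - fj k \<xi> j s\<bar>) integrable_on {a..b}"
    by (intro integrable_continuous_interval continuous_intros fj_cont)
  have "integral {a..b} (\<lambda>s. \<bar>fj k \<eta> j s - fj k \<xi> j s\<bar>) \<le> integral {a..b} ?G"
    by (rule integral_le[OF iD iG pt])
  also have "integral {a..b} ?G = (10 * c * d) * integral {a..b} (\<lambda>s. 1 / (1 + (\<alpha> - s)\<^sup>2))
        + (10 * c * d) * integral {a..b} (\<lambda>s. 1 / (1 + (\<beta> - s)\<^sup>2))"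
    by (subst integral_add) (auto intro!: integrable_continuous_interval continuous_intros g_cont
        simp: integral_mult[OF integrable_continuous_interval[OF g_cont]])
  also have "\<dots> \<le> (10 * c * d) * pi + (10 * c * d) * pi"
    using c0 d0 by (intro add_mono mult_left_mono g_int_le) auto
  also have "\<dots> = 20 * pi * c * d" by simp
  finally show ?thesis by (simp add: c_def dd)
qed

lemma cj_over_j:
  assumes j: "j \<noteq> 0" and k: "k \<noteq> 0"
  shows "(1 / jbr1 (real_of_int (k - j)) ^ 3) * (1 / \<bar>real_of_int j\<bar>)
          \<le> 2 / \<bar>real_of_int k\<bar> * (1 / (1 + (real_of_int (k - j))\<^sup>2))"
proof -
  define x where "x = real_of_int (k - j)"
  define J where "J = jbr1 x"
  define K where "K = \<bar>real_of_int k\<bar>"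
  define a where "a = \<bar>real_of_int j\<bar>"
  have J1: "1 \<le> J" by (simp add: J_def jbr1_ge1)
  have Jx: "\<bar>x\<bar> \<le> J" by (simp add: J_def jbr1_ge_abs)
  have J2: "J\<^sup>2 = 1 + x\<^sup>2" by (simp add: J_def jbr1_sq)
  have a1: "1 \<le> a" using j by (simp add: a_def)
  have K1: "1 \<le> K" using k by (simp add: K_def)
  have Ka: "K \<le> a * (1 + \<bar>x\<bar>)"
  proof -
    have "K \<le> a + \<bar>x\<bar>" unfolding K_def a_def x_def
      using abs_triangle_ineq[of "real_of_int j" "real_of_int k - real_of_int j"] by simp
    also have "\<dots> \<le> a + a * \<bar>x\<bar>" using a1 mult_right_mono[of 1 a "\<bar>x\<bar>"] by simp
    finally show ?thesis by (simp add: algebra_simps)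
  qed
  have "K / a \<le> 1 + \<bar>x\<bar>" using Ka a1 by (simp add: pos_divide_le_eq mult.commute)
  then have ia: "1 / a \<le> (1 + \<bar>x\<bar>) / K" using K1 by (simp add: pos_le_divide_eq)
  have "1 / J ^ 3 * (1 / a) = (1 / a) * (1 / J ^ 3)" by simp
  also have "\<dots> \<le> ((1 + \<bar>x\<bar>) / K) * (1 / J ^ 3)" using J1 by (intro mult_right_mono[OF ia]) simp
  also have "\<dots> = (1 + \<bar>x\<bar>) / (K * J ^ 3)" by simp
  also have "\<dots> \<le> (2 * J) / (K * J ^ 3)" using J1 Jx K1 by (intro divide_right_mono) auto
  also have "\<dots> = 2 / K * (1 / J\<^sup>2)" using J1 K1 by (simp add: field_simps power2_eq_square power3_eq_cube)
  also have "\<dots> = 2 / K * (1 / (1 + x\<^sup>2))" by (simp only: J2)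
  finally show ?thesis by (simp add: J_def x_def K_def a_def)
qed

lemma sum_cjj_bound:
  assumes k: "k \<noteq> 0"
  shows "(\<Sum>j\<in>JJ N. (1 / jbr1 (real_of_int (k - j)) ^ 3) * (1 / \<bar>real_of_int j\<bar>)) \<le> 10 / \<bar>real_of_int k\<bar>"
proof -
  have "(\<Sum>j\<in>JJ N. (1 / jbr1 (real_of_int (k - j)) ^ 3) * (1 / \<bar>real_of_int j\<bar>))
        \<le> (\<Sum>j\<in>JJ N. 2 / \<bar>real_of_int k\<bar> * (1 / (1 + (real_of_int (k - j))\<^sup>2)))"
    by (rule sum_mono) (rule cj_over_j[OF JJ_nz k])
  also have "\<dots> = 2 / \<bar>real_of_int k\<bar> * (\<Sum>j\<in>JJ N. 1 / (1 + (real_of_int (k - j))\<^sup>2))"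
    by (simp add: sum_distrib_left)
  also have "(\<Sum>j\<in>JJ N. 1 / (1 + (real_of_int (k - j))\<^sup>2)) = (\<Sum>m\<in>(\<lambda>j. k - j) ` JJ N. 1 / (1 + (real_of_int m)\<^sup>2))"
    by (subst sum.reindex) (auto simp: inj_on_def)
  also have "2 / \<bar>real_of_int k\<bar> * \<dots> \<le> 2 / \<bar>real_of_int k\<bar> * 5"
    by (intro mult_left_mono sum_finite_bound) (auto simp: JJ_finite)
  finally show ?thesis by simp
qed

lemma FF_diff_ap:
  assumes e: "e > 0"
  shows "\<exists>N0. \<forall>N\<ge>N0. \<bar>FF k \<eta> s - FF k \<xi> s\<bar> \<le> (\<Sum>j\<in>JJ N. \<bar>fj k \<eta> j s - fj k \<xi> j s\<bar>) + e"
proof -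
  obtain j1 where j1: "j1 \<noteq> 0" "FF k \<eta> s - e < fj k \<eta> j1 s" using FF_approx[OF e] by blast
  obtain j2 where j2: "j2 \<noteq> 0" "FF k \<xi> s - e < fj k \<xi> j2 s" using FF_approx[OF e] by blast
  have "\<bar>FF k \<eta> s - FF k \<xi> s\<bar> \<le> (\<Sum>j\<in>JJ N. \<bar>fj k \<eta> j s - fj k \<xi> j s\<bar>) + e"
    if N: "N \<ge> max (nat \<bar>j1\<bar>) (nat \<bar>j2\<bar>)" for N
  proof -
    have m1: "\<bar>fj k \<eta> j1 s - fj k \<xi> j1 s\<bar> \<le> (\<Sum>j\<in>JJ N. \<bar>fj k \<eta> j s - fj k \<xi> j s\<bar>)"
      by (rule member_le_sum) (use JJ_mem[OF j1(1)] N JJ_finite in auto)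
    have m2: "\<bar>fj k \<eta> j2 s - fj k \<xi> j2 s\<bar> \<le> (\<Sum>j\<in>JJ N. \<bar>fj k \<eta> j s - fj k \<xi> j s\<bar>)"
      by (rule member_le_sum) (use JJ_mem[OF j2(1)] N JJ_finite in auto)
    have "fj k \<xi> j1 s \<le> FF k \<xi> s" by (rule FF_ge[OF j1(1)])
    moreover have "fj k \<eta> j2 s \<le> FF k \<eta> s" by (rule FF_ge[OF j2(1)])
    ultimately show ?thesis using m1 m2 j1 j2 by linarith
  qed
  then show ?thesis by blast
qed

lemma FF_diff_int:
  assumes k: "k \<noteq> 0"
  shows "integral {a..b} (\<lambda>s. \<bar>FF k \<eta> s - FF k \<xi> s\<bar>) \<le> 200 * pi * (\<bar>\<eta> - \<xi>\<bar> / \<bar>real_of_int k\<bar>)"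
proof (rule dom_bound[where P = "\<lambda>N s. \<Sum>j\<in>JJ N. \<bar>fj k \<eta> j s - fj k \<xi> j s\<bar>"])
  show "continuous_on {a..b} (\<lambda>s. \<bar>FF k \<eta> s - FF k \<xi> s\<bar>)"
    by (intro continuous_intros FF_cont)
  show "continuous_on {a..b} (\<lambda>s. \<Sum>j\<in>JJ N. \<bar>fj k \<eta> j s - fj k \<xi> j s\<bar>)" for N
    by (intro continuous_intros fj_cont)
  show "0 \<le> \<bar>FF k \<eta> s - FF k \<xi> s\<bar>" for s by simp
  show "0 \<le> (\<Sum>j\<in>JJ N. \<bar>fj k \<eta> j s - fj k \<xi> j s\<bar>)" for N s by (intro sum_nonneg) simp
  show "\<exists>N0. \<forall>N\<ge>N0. \<bar>FF k \<eta> s - FF k \<xi> s\<bar> \<le> (\<Sum>j\<in>JJ N. \<bar>fj k \<eta> j s - fj k \<xi> j s\<bar>) + e" if "e > 0" for s e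
    by (rule FF_diff_ap[OF that])
  show "integral {a..b} (\<lambda>s. \<Sum>j\<in>JJ N. \<bar>fj k \<eta> j s - fj k \<xi> j s\<bar>) \<le> 200 * pi * (\<bar>\<eta> - \<xi>\<bar> / \<bar>real_of_int k\<bar>)" for N
  proof -
    have "integral {a..b} (\<lambda>s. \<Sum>j\<in>JJ N. \<bar>fj k \<eta> j s - fj k \<xi> j s\<bar>)
          = (\<Sum>j\<in>JJ N. integral {a..b} (\<lambda>s. \<bar>fj k \<eta> j s - fj k \<xi> j s\<bar>))"
      by (rule integral_sum) (auto simp: JJ_finite intro!: integrable_continuous_interval continuous_intros fj_cont)
    also have "\<dots> \<le> (\<Sum>j\<in>JJ N. 20 * pi * (1 / jbr1 (real_of_int (k - j)) ^ 3) * (\<bar>\<eta> - \<xi>\<bar> / \<bar>real_of_int j\<bar>))"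
      by (rule sum_mono) (rule Dj_int[OF JJ_nz])
    also have "\<dots> = (20 * pi * \<bar>\<eta> - \<xi>\<bar>) * (\<Sum>j\<in>JJ N. (1 / jbr1 (real_of_int (k - j)) ^ 3) * (1 / \<bar>real_of_int j\<bar>))"
      by (simp add: sum_distrib_left)
    also have "\<dots> \<le> (20 * pi * \<bar>\<eta> - \<xi>\<bar>) * (10 / \<bar>real_of_int k\<bar>)"
      by (rule mult_left_mono[OF sum_cjj_bound[OF k]]) simp
    also have "\<dots> = 200 * pi * (\<bar>\<eta> - \<xi>\<bar> / \<bar>real_of_int k\<bar>)" by simp
    finally show ?thesis .
  qed
qed



lemma int_degen: "b \<le> a \<Longrightarrow> integral {a..b::real} f = 0"
proof (cases "b < a")
  case True then show ?thesis by simp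
next
  case False
  assume "b \<le> a"
  with False have "b = a" by simp
  then show ?thesis by simp
qed

lemma exp_diff1:
  fixes x y B :: real
  assumes "y \<le> x" "x \<le> B"
  shows "exp x - exp y \<le> exp B * (x - y)"
proof -
  have "1 + (y - x) \<le> exp (y - x)" using exp_ge_add_one_self[of "y - x"] by simp
  then have "exp x * (1 + (y - x)) \<le> exp x * exp (y - x)" by (intro mult_left_mono) auto
  also have "exp x * exp (y - x) = exp y" by (simp add: exp_add[symmetric])
  finally have "exp x - exp y \<le> exp x * (x - y)" by (simp add: algebra_simps)
  also have "\<dots> \<le> exp B * (x - y)" using assms by (intro mult_right_mono) auto
  finally show ?thesis .
qed

lemma exp_diff:
  fixes x y B :: real
  assumes "x \<le> B" "y \<le> B"
  shows "\<bar>exp x - exp y\<bar> \<le> exp B * \<bar>x - y\<bar>"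
proof (cases "y \<le> x")
  case True
  have "exp y \<le> exp x" using True by simp
  then show ?thesis using exp_diff1[OF True assms(1)] True by (simp add: abs_of_nonneg)
next
  case False
  then have "x \<le> y" by simp
  have "exp x \<le> exp y" using \<open>x \<le> y\<close> by simp
  then show ?thesis using exp_diff1[OF \<open>x \<le> y\<close> assms(2)] \<open>x \<le> y\<close> by (simp add: abs_of_nonpos)
qed

lemma I_diff:
  assumes k: "k \<noteq> 0" and ex: "\<bar>\<eta>\<bar> \<le> \<bar>\<xi>\<bar>"
  shows "\<bar>integral {s0 k \<eta>..t} (FF k \<eta>) - integral {s0 k \<xi>..t} (FF k \<xi>)\<bar>
         \<le> (200 + 200 * pi) * (\<bar>\<eta> - \<xi>\<bar> / \<bar>real_of_int k\<bar>)"
proof -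
  define K where "K = \<bar>real_of_int k\<bar>"
  define a0 where "a0 = s0 k \<eta>"
  define b0 where "b0 = s0 k \<xi>"
  have K1: "1 \<le> K" using k by (simp add: K_def)
  have a00: "0 \<le> a0" by (simp add: a0_def s0_nonneg)
  have ab: "a0 \<le> b0" unfolding a0_def b0_def s0_def using ex by (intro real_sqrt_le_mono) auto
  have R0: "0 \<le> (200 + 200 * pi) * (\<bar>\<eta> - \<xi>\<bar> / K)" using K1 by simp
  show ?thesis
  proof (cases "t \<le> a0")
    case True
    then have "integral {a0..t} (FF k \<eta>) = 0" "integral {b0..t} (FF k \<xi>) = 0"
      using ab by (auto intro: int_degen)
    then show ?thesis using R0 by (simp add: a0_def b0_def K_def)
  next
    case False
    define u where "u = min b0 t"
    have au: "a0 \<le> u" "u \<le> t" "u \<le> b0" using False ab by (auto simp: u_def)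
    have u0: "0 \<le> u" using au a00 by simp
    have intF: "FF k x integrable_on {c..d}" for x c d by (rule integrable_continuous_interval[OF FF_cont])
    have e1: "integral {a0..t} (FF k \<eta>) = integral {a0..u} (FF k \<eta>) + integral {u..t} (FF k \<eta>)"
      using Henstock_Kurzweil_Integration.integral_combine[OF au(1) au(2) intF] by simp
    have e2: "integral {b0..t} (FF k \<xi>) = integral {u..t} (FF k \<xi>)"
    proof (cases "b0 \<le> t")
      case True then show ?thesis by (simp add: u_def)
    next
      case False
      then have "u = t" by (simp add: u_def)
      then show ?thesis using False by (simp add: int_degen)
    qed
    have e3: "integral {u..t} (FF k \<eta>) - integral {u..t} (FF k \<xi>) = integral {u..t} (\<lambda>s. FF k \<eta> s - FF k \<xi> s)"
      by (rule integral_diff[OF intF intF, symmetric])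
    have b1: "\<bar>integral {u..t} (\<lambda>s. FF k \<eta> s - FF k \<xi> s)\<bar> \<le> integral {u..t} (\<lambda>s. \<bar>FF k \<eta> s - FF k \<xi> s\<bar>)"
    proof -
      have i1: "(\<lambda>s. FF k \<eta> s - FF k \<xi> s) integrable_on {u..t}"
        by (intro integrable_continuous_interval continuous_intros FF_cont)
      have i2: "(\<lambda>s. \<bar>FF k \<eta> s - FF k \<xi> s\<bar>) integrable_on {u..t}"
        by (intro integrable_continuous_interval continuous_intros FF_cont)
      show ?thesis using integral_norm_bound_integral[OF i1 i2] by simp
    qed
    have b2: "integral {u..t} (\<lambda>s. \<bar>FF k \<eta> s - FF k \<xi> s\<bar>) \<le> 200 * pi * (\<bar>\<eta> - \<xi>\<bar> / K)"
      unfolding K_def by (rule FF_diff_int[OF k])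
    have c0: "0 \<le> integral {a0..u} (FF k \<eta>)" by (rule I_nonneg)
    have c1: "integral {a0..u} (FF k \<eta>) \<le> integral {a0..u} (\<lambda>s. 2000 * u / K)"
    proof (rule integral_le[OF intF])
      show "(\<lambda>s. 2000 * u / K) integrable_on {a0..u}"
        by (rule integrable_continuous_interval) (rule continuous_on_const)
      fix s assume s: "s \<in> {a0..u}"
      then have s0': "0 \<le> s" using a00 by simp
      have "a0\<^sup>2 \<le> s\<^sup>2" using s a00 by (intro power_mono) auto
      then have "\<bar>real_of_int k\<bar> + \<bar>\<eta>\<bar> \<le> 10 * s\<^sup>2" unfolding a0_def s0_sq by simp
      then have "FF k \<eta> s \<le> 2000 * s / K" unfolding K_def by (rule FF_small[OF k s0'])
      also have "\<dots> \<le> 2000 * u / K" using s K1 by (intro divide_right_mono) auto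
      finally show "FF k \<eta> s \<le> 2000 * u / K" .
    qed
    have c2: "integral {a0..u} (\<lambda>s. 2000 * u / K) = 2000 / K * ((u - a0) * u)"
      using au by (simp add: content_real_if)
    have c3: "(u - a0) * u \<le> \<bar>\<eta> - \<xi>\<bar> / 10"
    proof -
      have "(u - a0) * u \<le> u\<^sup>2 - a0\<^sup>2"
      proof -
        have "0 \<le> a0 * (u - a0)" using au a00 by simp
        then show ?thesis by (simp add: power2_eq_square algebra_simps)
      qed
      also have "\<dots> \<le> b0\<^sup>2 - a0\<^sup>2" using au u0 by (simp add: power_mono)
      also have "\<dots> = (\<bar>\<xi>\<bar> - \<bar>\<eta>\<bar>) / 10" by (simp add: a0_def b0_def s0_sq field_simps)
      also have "\<dots> \<le> \<bar>\<eta> - \<xi>\<bar> / 10"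
      proof -
        have "\<bar>\<xi>\<bar> - \<bar>\<eta>\<bar> \<le> \<bar>\<eta> - \<xi>\<bar>" by linarith
        then show ?thesis by (intro divide_right_mono) auto
      qed
      finally show ?thesis .
    qed
    have c4: "integral {a0..u} (FF k \<eta>) \<le> 200 * (\<bar>\<eta> - \<xi>\<bar> / K)"
    proof -
      have "2000 / K * ((u - a0) * u) \<le> 2000 / K * (\<bar>\<eta> - \<xi>\<bar> / 10)"
        using c3 K1 by (intro mult_left_mono) auto
      moreover have "2000 / K * (\<bar>\<eta> - \<xi>\<bar> / 10) = 200 * (\<bar>\<eta> - \<xi>\<bar> / K)" by simp
      ultimately show ?thesis using c1 c2 by linarith
    qed
    have "integral {a0..t} (FF k \<eta>) - integral {b0..t} (FF k \<xi>)
          = integral {a0..u} (FF k \<eta>) + integral {u..t} (\<lambda>s. FF k \<eta> s - FF k \<xi> s)"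
      using e1 e2 e3 by simp
    then have "\<bar>integral {a0..t} (FF k \<eta>) - integral {b0..t} (FF k \<xi>)\<bar>
          \<le> 200 * (\<bar>\<eta> - \<xi>\<bar> / K) + 200 * pi * (\<bar>\<eta> - \<xi>\<bar> / K)"
      using c0 c4 b1 b2 by linarith
    then show ?thesis by (simp add: a0_def b0_def K_def algebra_simps)
  qed
qed

lemma part4: "\<exists>C>0. \<forall>t\<ge>0. \<forall>(k::int) (\<eta>::real) (\<xi>::real).
        k \<noteq> 0 \<longrightarrow> \<bar>mw t k \<eta> - mw t k \<xi>\<bar> \<le> C * (\<bar>\<eta> - \<xi>\<bar> / \<bar>real_of_int k\<bar>)"
proof (intro exI[of _ "exp (50 * pi) * (200 + 200 * pi)"] conjI allI impI)
  show "0 < exp (50 * pi) * (200 + 200 * pi)" by (simp add: pi_gt_zero add_pos_pos)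
  fix t :: real and k :: int and \<eta> \<xi> :: real
  assume k: "k \<noteq> 0"
  have gen: "\<bar>mw t k x - mw t k y\<bar> \<le> exp (50 * pi) * (200 + 200 * pi) * (\<bar>x - y\<bar> / \<bar>real_of_int k\<bar>)"
    if xy: "\<bar>x\<bar> \<le> \<bar>y\<bar>" for x y
  proof -
    have "\<bar>mw t k x - mw t k y\<bar> \<le> exp (50 * pi) * \<bar>integral {s0 k x..t} (FF k x) - integral {s0 k y..t} (FF k y)\<bar>"
      unfolding mw_eq by (rule exp_diff) (rule FF_int_le)+
    also have "\<dots> \<le> exp (50 * pi) * ((200 + 200 * pi) * (\<bar>x - y\<bar> / \<bar>real_of_int k\<bar>))"
      by (intro mult_left_mono I_diff[OF k xy]) simp
    finally show ?thesis by (simp add: mult.assoc)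
  qed
  show "\<bar>mw t k \<eta> - mw t k \<xi>\<bar> \<le> exp (50 * pi) * (200 + 200 * pi) * (\<bar>\<eta> - \<xi>\<bar> / \<bar>real_of_int k\<bar>)"
  proof (cases "\<bar>\<eta>\<bar> \<le> \<bar>\<xi>\<bar>")
    case True then show ?thesis by (rule gen)
  next
    case False
    then have "\<bar>\<xi>\<bar> \<le> \<bar>\<eta>\<bar>" by simp
    from gen[OF this] show ?thesis by (simp add: abs_minus_commute)
  qed
qed


theorem lemma4p4:
  shows
  "(\<exists>C::real. \<forall>t\<ge>0. \<forall>k \<eta>. 1 \<le> mw t k \<eta> \<and> mw t k \<eta> \<le> C)
   \<and> (\<exists>C>0. \<forall>t\<ge>0. \<forall>(k::int) (\<eta>::real) (l::int) (\<xi>::real).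
        k \<noteq> 0 \<longrightarrow> (l, \<xi>) \<in> S t \<longrightarrow>
        1 / (1 + \<bar>t - \<eta> / real_of_int k\<bar>) \<le> C * (sqrt (mrate t l \<xi>) * jbr (k - l) (\<eta> - \<xi>) ^ 3))
   \<and> (\<exists>C>0. \<forall>t\<ge>1. \<forall>(k::int) (\<eta>::real) (l::int) (\<xi>::real).
        k \<noteq> 0 \<longrightarrow> \<bar>real_of_int k\<bar> + \<bar>\<eta>\<bar> \<le> 2 * (\<bar>real_of_int l\<bar> + \<bar>\<xi>\<bar>) \<longrightarrow>
        (\<bar>real_of_int k\<bar> + \<bar>\<eta>\<bar>) / (real_of_int k)\<^sup>2 * (1 / (1 + \<bar>t - \<eta> / real_of_int k\<bar>\<^sup>2))
          \<le> C * (sqrt (jbr1 (\<eta> / (real_of_int k) ^ 3)) / (1 + \<bar>t - \<eta> / real_of_int k\<bar>)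
                  * (1 + sqrt t * sqrt (mrate t l \<xi>)) * jbr (k - l) (\<eta> - \<xi>) ^ 5
                 + 1 / (jbr1 t)\<^sup>2))
   \<and> (\<exists>C>0. \<forall>t\<ge>0. \<forall>(k::int) (\<eta>::real) (\<xi>::real).
        k \<noteq> 0 \<longrightarrow> \<bar>mw t k \<eta> - mw t k \<xi>\<bar> \<le> C * (\<bar>\<eta> - \<xi>\<bar> / \<bar>real_of_int k\<bar>))"
proof (intro conjI)
  show "\<exists>C::real. \<forall>t\<ge>0. \<forall>k \<eta>. 1 \<le> mw t k \<eta> \<and> mw t k \<eta> \<le> C" by (rule part1)
next
  show "\<exists>C>0. \<forall>t\<ge>0. \<forall>(k::int) (\<eta>::real) (l::int) (\<xi>::real).
        k \<noteq> 0 \<longrightarrow> (l, \<xi>) \<in> S t \<longrightarrow>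
        1 / (1 + \<bar>t - \<eta> / real_of_int k\<bar>) \<le> C * (sqrt (mrate t l \<xi>) * jbr (k - l) (\<eta> - \<xi>) ^ 3)"
  proof (intro exI[of _ "1::real"] conjI allI impI)
    show "(0::real) < 1" by simp
    fix t :: real and k :: int and \<eta> :: real and l :: int and \<xi> :: real
    assume "k \<noteq> 0" "(l, \<xi>) \<in> S t"
    from part2_core[OF this, of \<eta>]
    show "1 / (1 + \<bar>t - \<eta> / real_of_int k\<bar>) \<le> 1 * (sqrt (mrate t l \<xi>) * jbr (k - l) (\<eta> - \<xi>) ^ 3)"
      by simp
  qed
next
  show "\<exists>C>0. \<forall>t\<ge>1. \<forall>(k::int) (\<eta>::real) (l::int) (\<xi>::real).
        k \<noteq> 0 \<longrightarrow> \<bar>real_of_int k\<bar> + \<bar>\<eta>\<bar> \<le> 2 * (\<bar>real_of_int l\<bar> + \<bar>\<xi>\<bar>) \<longrightarrow>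
        (\<bar>real_of_int k\<bar> + \<bar>\<eta>\<bar>) / (real_of_int k)\<^sup>2 * (1 / (1 + \<bar>t - \<eta> / real_of_int k\<bar>\<^sup>2))
          \<le> C * (sqrt (jbr1 (\<eta> / (real_of_int k) ^ 3)) / (1 + \<bar>t - \<eta> / real_of_int k\<bar>)
                  * (1 + sqrt t * sqrt (mrate t l \<xi>)) * jbr (k - l) (\<eta> - \<xi>) ^ 5
                 + 1 / (jbr1 t)\<^sup>2)"
  proof (intro exI[of _ "10::real"] conjI allI impI)
    show "(0::real) < 10" by simp
    fix t :: real and k :: int and \<eta> :: real and l :: int and \<xi> :: real
    assume "1 \<le> t" "k \<noteq> 0"
    then show "(\<bar>real_of_int k\<bar> + \<bar>\<eta>\<bar>) / (real_of_int k)\<^sup>2 * (1 / (1 + \<bar>t - \<eta> / real_of_int k\<bar>\<^sup>2))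
          \<le> 10 * (sqrt (jbr1 (\<eta> / (real_of_int k) ^ 3)) / (1 + \<bar>t - \<eta> / real_of_int k\<bar>)
                  * (1 + sqrt t * sqrt (mrate t l \<xi>)) * jbr (k - l) (\<eta> - \<xi>) ^ 5
                 + 1 / (jbr1 t)\<^sup>2)"
      by (rule part3_core)
  qed
next
  show "\<exists>C>0. \<forall>t\<ge>0. \<forall>(k::int) (\<eta>::real) (\<xi>::real).
        k \<noteq> 0 \<longrightarrow> \<bar>mw t k \<eta> - mw t k \<xi>\<bar> \<le> C * (\<bar>\<eta> - \<xi>\<bar> / \<bar>real_of_int k\<bar>)"
    by (rule part4)
qed

end
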